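(* Let $M$ be a normalizing unit-cancellative monoid. (1) $M$ is acyclic. (2) If $M$ is finitely generated, then $M$ is atomic. (3) If $M$ is finitely generated and reduced, then $\mathcal{A}(M)$ is the unique irredundant generating set for $M$, and it is finite.
   Context: $M^\times$ is the group of units of a monoid $M$; $M$ is reduced if $M^\times=\{1\}$. $M$ is normalizing if $aM=Ma$ for all $a\in M$. $M$ is unit-cancellative if $a=ab$ or $a=ba$ implies $b\in M^\times$. $M$ is acyclic if $a=bac$ implies $b,c\in M^\times$. An atom is a non-unit $a$ such that $a=bc$ implies $b\in M^\times$ or $c\in M^\times$; $\mathcal{A}(M)$ is the set of atoms; $M$ is atomic if every non-unit is a product of atoms. A generating set of $M$ is irredundant if no proper subset of it generates $M$ as a monoid. *)

theory Defs
  imports Main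
begin

text \<open>A monoid M is modelled as a type of class monoid_mult (the whole type is M).\<close>

definition is_unit :: "'a::monoid_mult \<Rightarrow> bool" where
  "is_unit a \<longleftrightarrow> (\<exists>b. a * b = 1 \<and> b * a = 1)"

definition reduced_monoid :: "'a::monoid_mult itself \<Rightarrow> bool" where
  "reduced_monoid _ \<longleftrightarrow> (\<forall>a::'a. is_unit a \<longrightarrow> a = 1)"

definition normalizing :: "'a::monoid_mult itself \<Rightarrow> bool" where
  "normalizing _ \<longleftrightarrow> (\<forall>a::'a. range (\<lambda>x. a * x) = range (\<lambda>x. x * a))"

definition unit_cancellative :: "'a::monoid_mult itself \<Rightarrow> bool" where
  "unit_cancellative _ \<longleftrightarrow> (\<forall>a b::'a. (a = a * b \<or> a = b * a) \<longrightarrow> is_unit b)"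

definition acyclic_monoid :: "'a::monoid_mult itself \<Rightarrow> bool" where
  "acyclic_monoid _ \<longleftrightarrow> (\<forall>a b c::'a. a = b * a * c \<longrightarrow> is_unit b \<and> is_unit c)"

definition atom :: "'a::monoid_mult \<Rightarrow> bool" where
  "atom a \<longleftrightarrow> \<not> is_unit a \<and> (\<forall>b c. a = b * c \<longrightarrow> is_unit b \<or> is_unit c)"

definition atoms :: "'a::monoid_mult set" where
  "atoms = {a. atom a}"

definition atomic_monoid :: "'a::monoid_mult itself \<Rightarrow> bool" where
  "atomic_monoid _ \<longleftrightarrow> (\<forall>a::'a. \<not> is_unit a \<longrightarrow>
      (\<exists>xs. xs \<noteq> [] \<and> set xs \<subseteq> atoms \<and> a = prod_list xs))"

definition generating_set :: "'a::monoid_mult set \<Rightarrow> bool" where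
  "generating_set S \<longleftrightarrow> (\<forall>x. \<exists>xs. set xs \<subseteq> S \<and> x = prod_list xs)"

definition finitely_generated :: "'a::monoid_mult itself \<Rightarrow> bool" where
  "finitely_generated _ \<longleftrightarrow> (\<exists>S::'a set. finite S \<and> generating_set S)"

definition irredundant_generating_set :: "'a::monoid_mult set \<Rightarrow> bool" where
  "irredundant_generating_set S \<longleftrightarrow> generating_set S \<and> (\<forall>T. T \<subset> S \<longrightarrow> \<not> generating_set T)"

end

theory Submission
  imports Defs
begin

lemma unit_one: "is_unit (1::'a::monoid_mult)"
  unfolding is_unit_def by auto

lemma unit_mult: "is_unit (u::'a::monoid_mult) \<Longrightarrow> is_unit v \<Longrightarrow> is_unit (u*v)"
  unfolding is_unit_def
proof -
  assume "\<exists>b. u * b = 1 \<and> b * u = 1" "\<exists>b. v * b = 1 \<and> b * v = 1"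
  then obtain u' v' where a: "u*u' = 1" "u'*u = 1" "v*v'=1" "v'*v=1" by blast
  have "(u*v)*(v'*u') = 1" by (metis a(1) a(3) mult.assoc mult.right_neutral)
  moreover have "(v'*u')*(u*v) = 1" by (metis a(2) a(4) mult.assoc mult.right_neutral)
  ultimately show "\<exists>b. u * v * b = 1 \<and> b * (u * v) = 1" by blast
qed

lemma df:
  assumes uc: "unit_cancellative TYPE('a::monoid_mult)" and xy: "(x::'a) * y = 1"
  shows "y * x = 1"
proof -
  define e where "e = y * x"
  have ee: "e = e * e" unfolding e_def by (metis xy mult.assoc mult.right_neutral)
  then have "is_unit e" using uc unfolding unit_cancellative_def by blast
  then obtain f where f: "e * f = 1" by (auto simp: is_unit_def)
  have "e = e * (e * f)" using f by simp
  also have "\<dots> = e * f" using ee by (metis mult.assoc)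
  finally show ?thesis using f e_def by simp
qed

lemma unit_factors:
  assumes uc: "unit_cancellative TYPE('a::monoid_mult)" and u: "is_unit ((x::'a) * y)"
  shows "is_unit x \<and> is_unit y"
proof -
  obtain w where w: "x*y*w = 1" "w*(x*y) = 1" using u by (auto simp: is_unit_def)
  have 1: "x*(y*w) = 1" using w by (simp add: mult.assoc)
  have 2: "(w*x)*y = 1" using w by (simp add: mult.assoc)
  show ?thesis unfolding is_unit_def
    using 1 2 df[OF uc 1] df[OF uc 2] by blast
qed

lemma norm_left:
  assumes "normalizing TYPE('a::monoid_mult)"
  shows "\<exists>y. (x::'a) * a = a * y"
proof -
  have "x * a \<in> range (\<lambda>z. z * a)" by auto
  then have "x * a \<in> range (\<lambda>z. a * z)" using assms unfolding normalizing_def by metis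
  then show ?thesis by auto
qed

lemma norm_right:
  assumes "normalizing TYPE('a::monoid_mult)"
  shows "\<exists>y. (a::'a) * x = y * a"
proof -
  have "a * x \<in> range (\<lambda>z. a * z)" by auto
  then have "a * x \<in> range (\<lambda>z. z * a)" using assms unfolding normalizing_def by metis
  then show ?thesis by auto
qed

lemma acyc:
  assumes n: "normalizing TYPE('a::monoid_mult)" and uc: "unit_cancellative TYPE('a)"
  shows "acyclic_monoid TYPE('a)"
  unfolding acyclic_monoid_def
proof (intro allI impI)
  fix a b c :: 'a
  assume h: "a = b * a * c"
  obtain b' where b': "b * a = a * b'" using norm_left[OF n] by blast
  have "a = a * (b' * c)" using h b' by (simp add: mult.assoc)
  then have "is_unit (b' * c)" using uc unfolding unit_cancellative_def by blast
  then have c: "is_unit c" using unit_factors[OF uc] by blast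
  obtain c' where c': "a * c = c' * a" using norm_right[OF n] by blast
  have "a = (b * c') * a" using h c' by (simp add: mult.assoc)
  then have "is_unit (b * c')" using uc unfolding unit_cancellative_def by blast
  then have "is_unit b" using unit_factors[OF uc] by blast
  with c show "is_unit b \<and> is_unit c" by blast
qed

lemma unit_inv: "is_unit (u::'a::monoid_mult) \<Longrightarrow> \<exists>v. is_unit v \<and> u*v = 1 \<and> v*u = 1"
  unfolding is_unit_def by blast

lemma unit_atom:
  assumes "is_unit (u::'a::monoid_mult)" "atom a"
  shows "atom (u * a)"
proof -
  obtain v where v: "is_unit v" "u*v = 1" "v*u = 1" using unit_inv[OF assms(1)] by blast
  have "\<not> is_unit (u*a)"
  proof
    assume "is_unit (u*a)"
    then have "is_unit (v*(u*a))" using unit_mult v(1) by blast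
    then show False using assms(2) v(3) unfolding atom_def by (simp add: mult.assoc[symmetric])
  qed
  moreover have "is_unit b \<or> is_unit c" if "u*a = b*c" for b c
  proof -
    have "a = (v*b)*c" using that v(3) by (metis mult.assoc mult_1_left)
    then have "is_unit (v*b) \<or> is_unit c" using assms(2) unfolding atom_def by blast
    then show ?thesis
    proof
      assume "is_unit (v*b)"
      then have "is_unit (u*(v*b))" using assms(1) unit_mult by blast
      then show ?thesis using v(2) by (simp add: mult.assoc[symmetric])
    qed simp
  qed
  ultimately show ?thesis unfolding atom_def by blast
qed

lemma atom_unit:
  assumes "is_unit (u::'a::monoid_mult)" "atom a"
  shows "atom (a * u)"
proof -
  obtain v where v: "is_unit v" "u*v = 1" "v*u = 1" using unit_inv[OF assms(1)] by blast
  have "\<not> is_unit (a*u)"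
  proof
    assume "is_unit (a*u)"
    then have "is_unit ((a*u)*v)" using unit_mult v(1) by blast
    then show False using assms(2) v(2) unfolding atom_def by (simp add: mult.assoc)
  qed
  moreover have "is_unit b \<or> is_unit c" if "a*u = b*c" for b c
  proof -
    have "a = b*(c*v)" using that v(2) by (metis mult.assoc mult_1_right)
    then have "is_unit b \<or> is_unit (c*v)" using assms(2) unfolding atom_def by blast
    then show ?thesis
    proof
      assume "is_unit (c*v)"
      then have "is_unit ((c*v)*u)" using assms(1) unit_mult by blast
      then show ?thesis using v(3) by (simp add: mult.assoc)
    qed simp
  qed
  ultimately show ?thesis unfolding atom_def by blast
qed

lemma remove_gen:
  assumes g: "generating_set T" and s: "s \<in> T" and sd: "s = prod_list (xs::'a::monoid_mult list)"
    and xs: "set xs \<subseteq> T - {s}"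
  shows "generating_set (T - {s})"
  unfolding generating_set_def
proof
  fix x :: 'a
  obtain zs where zs: "set zs \<subseteq> T" "x = prod_list zs" using g unfolding generating_set_def by blast
  have "\<exists>ws. set ws \<subseteq> T - {s} \<and> prod_list zs = prod_list ws" if "set zs \<subseteq> T" for zs
    using that
  proof (induction zs)
    case Nil
    then show ?case by (intro exI[of _ "[]"]) auto
  next
    case (Cons z zs)
    then obtain ws where ws: "set ws \<subseteq> T - {s}" "prod_list zs = prod_list ws" by auto
    show ?case
    proof (cases "z = s")
      case True
      then show ?thesis using ws xs sd Cons.prems
        by (intro exI[of _ "xs @ ws"]) auto
    next
      case False
      then show ?thesis using ws Cons.prems by (intro exI[of _ "z # ws"]) auto
    qed
  qed
  then show "\<exists>xs. set xs \<subseteq> T - {s} \<and> x = prod_list xs" using zs by metis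
qed

lemma irred_atom:
  assumes uc: "unit_cancellative TYPE('a::monoid_mult)" and ac: "acyclic_monoid TYPE('a)"
    and T: "irredundant_generating_set T" and s: "s \<in> T" and nu: "\<not> is_unit (s::'a)"
  shows "atom s"
proof (rule ccontr)
  assume "\<not> atom s"
  then obtain b c where bc: "s = b * c" "\<not> is_unit b" "\<not> is_unit c" using nu unfolding atom_def by blast
  have g: "generating_set T" using T unfolding irredundant_generating_set_def by blast
  obtain xs where xs: "set xs \<subseteq> T" "b = prod_list xs" using g unfolding generating_set_def by blast
  obtain ys where ys: "set ys \<subseteq> T" "c = prod_list ys" using g unfolding generating_set_def by blast
  show False
  proof (cases "s \<in> set xs")
    case True
    then obtain p q where "xs = p @ s # q" by (meson split_list)
    then have hb: "b = prod_list p * s * prod_list q" using xs(2) by (simp add: mult.assoc)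
    have "s = b * c" by (rule bc(1))
    also have "b * c = prod_list p * s * prod_list q * c" using hb by simp
    finally have "s = prod_list p * s * (prod_list q * c)" by (simp add: mult.assoc)
    then have "is_unit (prod_list q * c)" using ac unfolding acyclic_monoid_def by blast
    then show False using unit_factors[OF uc] bc by blast
  next
    case F1: False
    show False
    proof (cases "s \<in> set ys")
      case True
      then obtain p q where "ys = p @ s # q" by (meson split_list)
      then have hc: "c = prod_list p * s * prod_list q" using ys(2) by (simp add: mult.assoc)
      have "s = b * c" by (rule bc(1))
      also have "b * c = b * (prod_list p * s * prod_list q)" using hc by simp
      finally have "s = (b * prod_list p) * s * prod_list q" by (simp add: mult.assoc)
      then have "is_unit (b * prod_list p)" using ac unfolding acyclic_monoid_def by blast
      then show False using unit_factors[OF uc] bc by blast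
    next
      case False
      have "generating_set (T - {s})"
        using remove_gen[OF g s, of "xs @ ys"] xs ys bc F1 False by auto
      moreover have "T - {s} \<subset> T" using s by blast
      ultimately show False using T unfolding irredundant_generating_set_def by blast
    qed
  qed
qed

lemma exists_irred:
  assumes "finite S" "generating_set (S::'a::monoid_mult set)"
  shows "\<exists>T::'a set. irredundant_generating_set T"
proof -
  define P where "P n \<longleftrightarrow> (\<exists>T. T \<subseteq> S \<and> generating_set T \<and> card T = n)" for n
  have "P (card S)" using assms unfolding P_def by blast
  then have "P (LEAST n. P n)" by (rule LeastI)
  then obtain T where T: "T \<subseteq> S" "generating_set T" "card T = (LEAST n. P n)" unfolding P_def by blast
  have "\<not> generating_set T'" if "T' \<subset> T" for T'
  proof
    assume "generating_set T'"
    then have "P (card T')" using that T(1) unfolding P_def by blast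
    then have "card T \<le> card T'" using T(3) Least_le by metis
    moreover have "card T' < card T" using that T(1) assms(1)
      by (meson finite_subset psubset_card_mono)
    ultimately show False by simp
  qed
  then have "irredundant_generating_set T"
    using T(2) unfolding irredundant_generating_set_def by simp
  then show ?thesis by (rule exI)
qed

lemma list_atoms:
  assumes "\<forall>x\<in>set xs. is_unit x \<or> atom (x::'a::monoid_mult)"
  shows "is_unit (prod_list xs) \<or> (\<exists>ys. ys \<noteq> [] \<and> set ys \<subseteq> atoms \<and> prod_list xs = prod_list ys)"
  using assms
proof (induction xs)
  case Nil
  then show ?case using unit_one by auto
next
  case (Cons x xs)
  then have hx: "is_unit x \<or> atom x" by simp
  from Cons consider "is_unit (prod_list xs)"
    | ys where "ys \<noteq> []" "set ys \<subseteq> atoms" "prod_list xs = prod_list ys" by auto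
  then show ?case
  proof cases
    case 1
    from hx show ?thesis
    proof
      assume "is_unit x" then show ?thesis using 1 unit_mult by (metis prod_list.Cons)
    next
      assume "atom x"
      then have "atom (x * prod_list xs)" using atom_unit 1 by blast
      then show ?thesis by (intro disjI2 exI[of _ "[x * prod_list xs]"]) (auto simp: atoms_def)
    qed
  next
    case 2
    then obtain y ys' where y: "ys = y # ys'" by (cases ys) auto
    from hx show ?thesis
    proof
      assume u: "is_unit x"
      have "atom y" using 2 y by (auto simp: atoms_def)
      then have "atom (x * y)" using unit_atom u by blast
      then show ?thesis using 2 y
        by (intro disjI2 exI[of _ "(x*y) # ys'"]) (auto simp: atoms_def mult.assoc)
    next
      assume "atom x"
      then show ?thesis using 2
        by (intro disjI2 exI[of _ "x # ys"]) (auto simp: atoms_def)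
    qed
  qed
qed

lemma atom_in_list:
  assumes r: "reduced_monoid TYPE('a::monoid_mult)"
  shows "atom (a::'a) \<Longrightarrow> a = prod_list xs \<Longrightarrow> a \<in> set xs"
proof (induction xs)
  case Nil
  then show ?case by (metis atom_def unit_one prod_list.Nil)
next
  case (Cons x xs)
  then have "is_unit x \<or> is_unit (prod_list xs)" unfolding atom_def by simp
  then show ?case
  proof
    assume "is_unit x"
    then have "x = 1" using r unfolding reduced_monoid_def by blast
    then show ?thesis using Cons by simp
  next
    assume "is_unit (prod_list xs)"
    then have "prod_list xs = 1" using r unfolding reduced_monoid_def by blast
    then show ?thesis using Cons by simp
  qed
qed

theorem proposition5p6:
  assumes "normalizing TYPE('a::monoid_mult)"
    and "unit_cancellative TYPE('a)"
  shows "acyclic_monoid TYPE('a) \<and>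
         (finitely_generated TYPE('a) \<longrightarrow> atomic_monoid TYPE('a)) \<and>
         (finitely_generated TYPE('a) \<and> reduced_monoid TYPE('a) \<longrightarrow>
           irredundant_generating_set (atoms :: 'a set) \<and>
           (\<forall>S::'a set. irredundant_generating_set S \<longrightarrow> S = atoms) \<and>
           finite (atoms :: 'a set))"
proof -
  have ac: "acyclic_monoid TYPE('a)" using acyc assms by blast
  have atomic: "atomic_monoid TYPE('a)" if fg: "finitely_generated TYPE('a)"
  proof -
    obtain S :: "'a set" where "finite S" "generating_set S" using fg unfolding finitely_generated_def by blast
    then obtain T :: "'a set" where T: "irredundant_generating_set T" using exists_irred by blast
    then have g: "generating_set T" unfolding irredundant_generating_set_def by blast
    show ?thesis unfolding atomic_monoid_def
    proof (intro allI impI)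
      fix a :: 'a assume nu: "\<not> is_unit a"
      obtain xs where xs: "set xs \<subseteq> T" "a = prod_list xs" using g unfolding generating_set_def by blast
      have "\<forall>x\<in>set xs. is_unit x \<or> atom x" using xs(1) irred_atom[OF assms(2) ac T] by blast
      then show "\<exists>xs. xs \<noteq> [] \<and> set xs \<subseteq> atoms \<and> a = prod_list xs"
        using list_atoms nu xs(2) by metis
    qed
  qed
  have part3: "irredundant_generating_set (atoms :: 'a set) \<and>
           (\<forall>S::'a set. irredundant_generating_set S \<longrightarrow> S = atoms) \<and>
           finite (atoms :: 'a set)" if fg: "finitely_generated TYPE('a)" and r: "reduced_monoid TYPE('a)"
  proof -
    have at: "atomic_monoid TYPE('a)" using atomic fg by blast
    have gA: "generating_set (atoms :: 'a set)" unfolding generating_set_def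
    proof
      fix x :: 'a
      show "\<exists>xs. set xs \<subseteq> atoms \<and> x = prod_list xs"
      proof (cases "is_unit x")
        case True
        then have "x = 1" using r unfolding reduced_monoid_def by blast
        then show ?thesis by (intro exI[of _ "[]"]) auto
      next
        case False
        then show ?thesis using at unfolding atomic_monoid_def by blast
      qed
    qed
    have sub: "(atoms :: 'a set) \<subseteq> S" if gS: "generating_set S" for S
    proof
      fix a :: 'a assume "a \<in> atoms"
      then have "atom a" by (simp add: atoms_def)
      moreover obtain xs where "set xs \<subseteq> S" "a = prod_list xs" using gS unfolding generating_set_def by blast
      ultimately show "a \<in> S" using atom_in_list[OF r] by blast
    qed
    have irr: "irredundant_generating_set (atoms :: 'a set)"
      unfolding irredundant_generating_set_def using gA sub by blast
    have uniq: "\<forall>S::'a set. irredundant_generating_set S \<longrightarrow> S = atoms"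
      using gA sub unfolding irredundant_generating_set_def by blast
    obtain S :: "'a set" where "finite S" "generating_set S" using fg unfolding finitely_generated_def by blast
    then have "finite (atoms :: 'a set)" using sub finite_subset by blast
    then show ?thesis using irr uniq by blast
  qed
  show ?thesis using ac atomic part3 by blast
qed

end
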